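(* Let $(G,\vec E,0,\tau)$ be a game-graph with associated Boolean function $L$. Let $${\cal Z}_{\rm strat}:=\{Z(\sigma_1):\sigma_1\in{\cal S}_1\},\qquad {\cal A}_{\rm strat}:=\{A(\sigma_2):\sigma_2\in{\cal S}_2\}.$$ Then $${\cal Z}(L)\subset{\cal Z}_{\rm strat}\subset{\cal Z}^\uparrow(L)\qquad\text{and}\qquad{\cal A}(L)\subset{\cal A}_{\rm strat}\subset{\cal A}^\uparrow(L).$$
   Context: **Game-graph.** A game-graph is a quadruple $(G,\vec E,0,\tau)$ where: - $(G,\vec E)$ is a finite acyclic directed graph; - $0\in G$ is such that every $v\in G$ is reachable from $0$ by a directed path; - $\tau:\mathring G\to\{1,2\}$. Here ${\cal O}(v):=\{w:(v,w)\in\vec E\}$, $\partial G:=\{v:{\cal O}(v)=\emptyset\}$ (possible outcomes), $\mathring G:=G\setminus\partial G$, and $\mathring G^i:=\{v\in\mathring G:\tau(v)=i\}$ (Alice moves at $\tau=1$, Bob at $\tau=2$). **Strategies.** A strategy for Alice is a map $\sigma_1$ on $\mathring G^1$ with $\sigma_1(v)\in{\cal O}(v)$; strategies $\sigma_2$ for Bob are defined similarly on $\mathring G^2$. ${\cal S}_1$ and ${\cal S}_2$ denote the sets of strategies. Given $\sigma_1,\sigma_2$, there is a unique path $0=v_0,\dots,v_n$ with $v_n\in\partial G$ and $v_{k+1}=\sigma_{\tau(v_k)}(v_k)$; set $o(\sigma_1,\sigma_2):=v_n$. Define $$Z(\sigma_1):=\{o(\sigma_1,\sigma'):\sigma'\in{\cal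 S}_2\},\qquad A(\sigma_2):=\{o(\sigma',\sigma_2):\sigma'\in{\cal S}_1\}.$$ **Boolean function.** For $x:\partial G\to\{0,1\}$ extend to $\bar x$ on $G$ by $\bar x=x$ on $\partial G$, $\bar x(v)=\min_{w\in{\cal O}(v)}\bar x(w)$ for $v\in\mathring G^1$, and $\bar x(v)=\max_{w\in{\cal O}(v)}\bar x(w)$ for $v\in\mathring G^2$. Set $L(x):=\bar x(0)$, a monotone Boolean function on $\{0,1\}^{\partial G}$. **One-sets and zero-sets.** A one-set of $L$ is $A\subset\partial G$ with $L(1_A)=1$; a zero-set is $Z\subset\partial G$ with $L(1-1_Z)=0$; minimal means containing no other such set as a proper subset. ${\cal A}^\uparrow(L)$ and ${\cal Z}^\uparrow(L)$ denote the sets of one-sets and zero-sets, and ${\cal A}(L)$ and ${\cal Z}(L)$ the minimal ones. *)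

theory Defs
  imports Main
begin

text \<open>A game-graph (G, E, 0, tau): vertex set V, edge relation E, root r (the vertex 0),
  and the player labelling tau (1 = Alice, 2 = Bob) on interior vertices.\<close>

definition succs :: "('v \<times> 'v) set \<Rightarrow> 'v \<Rightarrow> 'v set" where
  "succs E v = {w. (v, w) \<in> E}"

definition bdry :: "'v set \<Rightarrow> ('v \<times> 'v) set \<Rightarrow> 'v set" where
  "bdry V E = {v \<in> V. succs E v = {}}"

definition interior :: "'v set \<Rightarrow> ('v \<times> 'v) set \<Rightarrow> 'v set" where
  "interior V E = V - bdry V E"

definition interior_of :: "'v set \<Rightarrow> ('v \<times> 'v) set \<Rightarrow> ('v \<Rightarrow> nat) \<Rightarrow> nat \<Rightarrow> 'v set" where
  "interior_of V E tau i = {v \<in> interior V E. tau v = i}"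

definition game_graph :: "'v set \<Rightarrow> ('v \<times> 'v) set \<Rightarrow> 'v \<Rightarrow> ('v \<Rightarrow> nat) \<Rightarrow> bool" where
  "game_graph V E r tau \<longleftrightarrow>
     finite V \<and> E \<subseteq> V \<times> V \<and> acyclic E \<and> r \<in> V \<and>
     (\<forall>v\<in>V. (r, v) \<in> E\<^sup>*) \<and>
     (\<forall>v\<in>interior V E. tau v \<in> {1, 2})"

definition strategies :: "'v set \<Rightarrow> ('v \<times> 'v) set \<Rightarrow> ('v \<Rightarrow> nat) \<Rightarrow> nat \<Rightarrow> ('v \<Rightarrow> 'v) set" where
  "strategies V E tau i = {\<sigma>. \<forall>v\<in>interior_of V E tau i. \<sigma> v \<in> succs E v}"

definition play_step :: "'v set \<Rightarrow> ('v \<times> 'v) set \<Rightarrow> ('v \<Rightarrow> nat) \<Rightarrow> ('v \<Rightarrow> 'v) \<Rightarrow> ('v \<Rightarrow> 'v) \<Rightarrow> ('v \<times> 'v) set" where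
  "play_step V E tau \<sigma>1 \<sigma>2 =
     {(v, w). v \<in> interior V E \<and> w = (if tau v = 1 then \<sigma>1 v else \<sigma>2 v)}"

definition outcome :: "'v set \<Rightarrow> ('v \<times> 'v) set \<Rightarrow> 'v \<Rightarrow> ('v \<Rightarrow> nat) \<Rightarrow> ('v \<Rightarrow> 'v) \<Rightarrow> ('v \<Rightarrow> 'v) \<Rightarrow> 'v" where
  "outcome V E r tau \<sigma>1 \<sigma>2 =
     (THE w. w \<in> bdry V E \<and> (r, w) \<in> (play_step V E tau \<sigma>1 \<sigma>2)\<^sup>*)"

definition Zset :: "'v set \<Rightarrow> ('v \<times> 'v) set \<Rightarrow> 'v \<Rightarrow> ('v \<Rightarrow> nat) \<Rightarrow> ('v \<Rightarrow> 'v) \<Rightarrow> 'v set" where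
  "Zset V E r tau \<sigma>1 = {outcome V E r tau \<sigma>1 \<sigma>' | \<sigma>'. \<sigma>' \<in> strategies V E tau 2}"

definition Aset :: "'v set \<Rightarrow> ('v \<times> 'v) set \<Rightarrow> 'v \<Rightarrow> ('v \<Rightarrow> nat) \<Rightarrow> ('v \<Rightarrow> 'v) \<Rightarrow> 'v set" where
  "Aset V E r tau \<sigma>2 = {outcome V E r tau \<sigma>' \<sigma>2 | \<sigma>'. \<sigma>' \<in> strategies V E tau 1}"

text \<open>The extension xbar of x (Boolean values: True = 1, False = 0): xbar is min over successors
  at Alice's vertices and max at Bob's vertices. On a finite acyclic graph the recursive
  definition is equivalent to the least predicate closed under the following rules;
  xbar_one x v means xbar(v) = 1.\<close>
inductive xbar_one :: "'v set \<Rightarrow> ('v \<times> 'v) set \<Rightarrow> ('v \<Rightarrow> nat) \<Rightarrow> ('v \<Rightarrow> bool) \<Rightarrow> 'v \<Rightarrow> bool"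
  for V E tau x where
  leaf: "v \<in> bdry V E \<Longrightarrow> x v \<Longrightarrow> xbar_one V E tau x v"
| alice: "v \<in> interior_of V E tau 1 \<Longrightarrow> (\<forall>w\<in>succs E v. xbar_one V E tau x w) \<Longrightarrow> xbar_one V E tau x v"
| bob: "v \<in> interior_of V E tau 2 \<Longrightarrow> (\<exists>w\<in>succs E v. xbar_one V E tau x w) \<Longrightarrow> xbar_one V E tau x v"

definition Lfun :: "'v set \<Rightarrow> ('v \<times> 'v) set \<Rightarrow> 'v \<Rightarrow> ('v \<Rightarrow> nat) \<Rightarrow> ('v \<Rightarrow> bool) \<Rightarrow> bool" where
  "Lfun V E r tau x = xbar_one V E tau x r"

definition one_sets :: "'v set \<Rightarrow> ('v \<times> 'v) set \<Rightarrow> 'v \<Rightarrow> ('v \<Rightarrow> nat) \<Rightarrow> 'v set set" where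
  "one_sets V E r tau = {A. A \<subseteq> bdry V E \<and> Lfun V E r tau (\<lambda>v. v \<in> A)}"

definition zero_sets :: "'v set \<Rightarrow> ('v \<times> 'v) set \<Rightarrow> 'v \<Rightarrow> ('v \<Rightarrow> nat) \<Rightarrow> 'v set set" where
  "zero_sets V E r tau = {Z. Z \<subseteq> bdry V E \<and> \<not> Lfun V E r tau (\<lambda>v. v \<notin> Z)}"

definition minimal_sets :: "'a set set \<Rightarrow> 'a set set" where
  "minimal_sets S = {X \<in> S. \<not> (\<exists>Y\<in>S. Y \<subset> X)}"

end

theory Submission
  imports Defs
begin

definition s2star :: "'v set \<Rightarrow> ('v \<times> 'v) set \<Rightarrow> ('v \<Rightarrow> nat) \<Rightarrow> ('v \<Rightarrow> bool) \<Rightarrow> 'v \<Rightarrow> 'v" where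
  "s2star V E tau x y = (if \<exists>w\<in>succs E y. xbar_one V E tau x w
     then SOME w. w \<in> succs E y \<and> xbar_one V E tau x w else SOME w. w \<in> succs E y)"

definition s1star :: "'v set \<Rightarrow> ('v \<times> 'v) set \<Rightarrow> ('v \<Rightarrow> nat) \<Rightarrow> ('v \<Rightarrow> bool) \<Rightarrow> 'v \<Rightarrow> 'v" where
  "s1star V E tau x y = (if \<exists>w\<in>succs E y. \<not> xbar_one V E tau x w
     then SOME w. w \<in> succs E y \<and> \<not> xbar_one V E tau x w else SOME w. w \<in> succs E y)"

lemma interior_succs: "v \<in> interior V E \<Longrightarrow> succs E v \<noteq> {}"
  by (auto simp: interior_def bdry_def)

lemma s2star_strat: "s2star V E tau x \<in> strategies V E tau 2"
proof -
  { fix v assume "v \<in> interior_of V E tau 2"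
    then have ne: "succs E v \<noteq> {}" by (auto simp: interior_of_def dest: interior_succs)
    have "s2star V E tau x v \<in> succs E v"
    proof (cases "\<exists>w\<in>succs E v. xbar_one V E tau x w")
      case True
      then have "\<exists>w. w \<in> succs E v \<and> xbar_one V E tau x w" by blast
      then have "(SOME w. w \<in> succs E v \<and> xbar_one V E tau x w) \<in> succs E v"
        by (rule someI2_ex) blast
      then show ?thesis using True by (simp add: s2star_def)
    next
      case False
      have "\<exists>w. w \<in> succs E v" using ne by blast
      then have "(SOME w. w \<in> succs E v) \<in> succs E v" by (rule someI_ex)
      then show ?thesis using False by (simp add: s2star_def)
    qed }
  then show ?thesis by (auto simp: strategies_def)
qed

lemma s1star_strat: "s1star V E tau x \<in> strategies V E tau 1"
proof -
  { fix v assume "v \<in> interior_of V E tau 1"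
    then have ne: "succs E v \<noteq> {}" by (auto simp: interior_of_def dest: interior_succs)
    have "s1star V E tau x v \<in> succs E v"
    proof (cases "\<exists>w\<in>succs E v. \<not> xbar_one V E tau x w")
      case True
      then have "\<exists>w. w \<in> succs E v \<and> \<not> xbar_one V E tau x w" by blast
      then have "(SOME w. w \<in> succs E v \<and> \<not> xbar_one V E tau x w) \<in> succs E v"
        by (rule someI2_ex) blast
      then show ?thesis using True by (simp add: s1star_def)
    next
      case False
      have "\<exists>w. w \<in> succs E v" using ne by blast
      then have "(SOME w. w \<in> succs E v) \<in> succs E v" by (rule someI_ex)
      then show ?thesis using False by (simp add: s1star_def)
    qed }
  then show ?thesis by (auto simp: strategies_def)
qed

lemma step_E:
  assumes g: "game_graph V E r tau" and s1: "\<sigma>1 \<in> strategies V E tau 1"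
    and s2: "\<sigma>2 \<in> strategies V E tau 2" and st: "(v, w) \<in> play_step V E tau \<sigma>1 \<sigma>2"
  shows "(v, w) \<in> E"
proof -
  have vi: "v \<in> interior V E" and w: "w = (if tau v = 1 then \<sigma>1 v else \<sigma>2 v)"
    using st by (auto simp: play_step_def)
  have "tau v \<in> {1,2}" using g vi by (auto simp: game_graph_def)
  then show ?thesis using s1 s2 vi w
    by (auto simp: strategies_def interior_of_def succs_def)
qed

lemma bdry_no_step: "u \<in> bdry V E \<Longrightarrow> (u, w) \<notin> play_step V E tau \<sigma>1 \<sigma>2"
  by (auto simp: play_step_def interior_def)

lemma reach_unique:
  assumes "(v, u1) \<in> (play_step V E tau \<sigma>1 \<sigma>2)\<^sup>*" "u1 \<in> bdry V E"
  shows "(v, u2) \<in> (play_step V E tau \<sigma>1 \<sigma>2)\<^sup>* \<Longrightarrow> u2 \<in> bdry V E \<Longrightarrow> u1 = u2"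
  using assms
proof (induction arbitrary: u2 rule: converse_rtrancl_induct)
  case base
  from base.prems(1) show ?case
  proof (cases rule: converse_rtranclE)
    case base then show ?thesis by simp
  next
    case (step z) then show ?thesis using bdry_no_step base.prems(3) by fast
  qed
next
  case (step y z)
  from step.prems(1) show ?case
  proof (cases rule: converse_rtranclE)
    case base
    then show ?thesis using step bdry_no_step by metis
  next
    case (step z')
    then have "z' = z" using \<open>(y, z) \<in> play_step V E tau \<sigma>1 \<sigma>2\<close>
      by (auto simp: play_step_def)
    then show ?thesis using step.IH step.prems \<open>(z', u2) \<in> _\<close> by blast
  qed
qed

lemma reach_exists:
  assumes g: "game_graph V E r tau" and s1: "\<sigma>1 \<in> strategies V E tau 1"
    and s2: "\<sigma>2 \<in> strategies V E tau 2" and vV: "v \<in> V"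
  shows "\<exists>u. (v, u) \<in> (play_step V E tau \<sigma>1 \<sigma>2)\<^sup>* \<and> u \<in> bdry V E"
proof -
  have fin: "finite E" using g unfolding game_graph_def
    using finite_subset[of E "V \<times> V"] by blast
  have ac: "acyclic E" using g by (simp add: game_graph_def)
  have wf: "wf (E\<inverse>)" by (rule finite_acyclic_wf_converse[OF fin ac])
  show ?thesis using vV
  proof (induction v rule: wf_induct[OF wf])
    case (1 v)
    show ?case
    proof (cases "v \<in> bdry V E")
      case True then show ?thesis by blast
    next
      case False
      then have vi: "v \<in> interior V E" using "1.prems" by (auto simp: interior_def)
      define w where "w = (if tau v = 1 then \<sigma>1 v else \<sigma>2 v)"
      have st: "(v, w) \<in> play_step V E tau \<sigma>1 \<sigma>2" using vi by (auto simp: play_step_def w_def)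
      then have "(v, w) \<in> E" using step_E[OF g s1 s2] by blast
      then have "w \<in> V" using g by (auto simp: game_graph_def)
      moreover have "(w, v) \<in> E\<inverse>" using \<open>(v, w) \<in> E\<close> by simp
      ultimately obtain u where u: "(w, u) \<in> (play_step V E tau \<sigma>1 \<sigma>2)\<^sup>*" "u \<in> bdry V E"
        using "1.IH" "1.prems" by blast
      have "(v, u) \<in> (play_step V E tau \<sigma>1 \<sigma>2)\<^sup>*"
        by (rule converse_rtrancl_into_rtrancl[OF st u(1)])
      then show ?thesis using u(2) by blast
    qed
  qed
qed

lemma outcome_char:
  assumes g: "game_graph V E r tau" and s1: "\<sigma>1 \<in> strategies V E tau 1"
    and s2: "\<sigma>2 \<in> strategies V E tau 2"
  shows "(r, outcome V E r tau \<sigma>1 \<sigma>2) \<in> (play_step V E tau \<sigma>1 \<sigma>2)\<^sup>*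
     \<and> outcome V E r tau \<sigma>1 \<sigma>2 \<in> bdry V E"
proof -
  have "r \<in> V" using g by (simp add: game_graph_def)
  then obtain u where u: "(r, u) \<in> (play_step V E tau \<sigma>1 \<sigma>2)\<^sup>*" "u \<in> bdry V E"
    using reach_exists[OF g s1 s2] by blast
  have "\<exists>!u. u \<in> bdry V E \<and> (r, u) \<in> (play_step V E tau \<sigma>1 \<sigma>2)\<^sup>*"
    using u reach_unique by metis
  then show ?thesis unfolding outcome_def by (metis (no_types, lifting) theI')
qed

lemma xbar_inv_alice:
  "xbar_one V E tau x v \<Longrightarrow> v \<in> interior V E \<Longrightarrow> tau v = 1 \<Longrightarrow> w \<in> succs E v \<Longrightarrow> xbar_one V E tau x w"
  by (erule xbar_one.cases) (auto simp: interior_def interior_of_def)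

lemma xbar_inv_bob:
  "xbar_one V E tau x v \<Longrightarrow> v \<in> interior V E \<Longrightarrow> tau v = 2 \<Longrightarrow> \<exists>w\<in>succs E v. xbar_one V E tau x w"
  by (erule xbar_one.cases) (auto simp: interior_def interior_of_def)

lemma xbar_inv_leaf:
  "xbar_one V E tau x v \<Longrightarrow> v \<in> bdry V E \<Longrightarrow> x v"
  by (erule xbar_one.cases) (auto simp: interior_def interior_of_def)

lemma strongA:
  assumes g: "game_graph V E r tau" and s1: "\<sigma>1 \<in> strategies V E tau 1"
    and xv: "xbar_one V E tau x v"
    and p: "(v, u) \<in> (play_step V E tau \<sigma>1 (s2star V E tau x))\<^sup>*"
  shows "xbar_one V E tau x u"
  using p
proof (induction rule: rtrancl_induct)
  case base then show ?case using xv .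
next
  case (step y z)
  have yi: "y \<in> interior V E" and z: "z = (if tau y = 1 then \<sigma>1 y else s2star V E tau x y)"
    using step.hyps(2) by (auto simp: play_step_def)
  have t: "tau y \<in> {1,2}" using g yi by (auto simp: game_graph_def)
  show ?case
  proof (cases "tau y = 1")
    case True
    then have "z \<in> succs E y" using s1 yi z by (auto simp: strategies_def interior_of_def)
    then show ?thesis using xbar_inv_alice[OF step.IH yi True] by blast
  next
    case False
    then have "tau y = 2" using t by auto
    then have ex: "\<exists>w\<in>succs E y. xbar_one V E tau x w" using xbar_inv_bob[OF step.IH yi] by blast
    then have "z = (SOME w. w \<in> succs E y \<and> xbar_one V E tau x w)"
      using z False by (simp add: s2star_def)
    moreover have "\<exists>w. w \<in> succs E y \<and> xbar_one V E tau x w" using ex by blast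
    then have "xbar_one V E tau x (SOME w. w \<in> succs E y \<and> xbar_one V E tau x w)"
      by (rule someI2_ex) blast
    ultimately show ?thesis by simp
  qed
qed

lemma strongB:
  assumes g: "game_graph V E r tau" and s2: "\<sigma>2 \<in> strategies V E tau 2"
    and xv: "\<not> xbar_one V E tau x v"
    and p: "(v, u) \<in> (play_step V E tau (s1star V E tau x) \<sigma>2)\<^sup>*"
  shows "\<not> xbar_one V E tau x u"
  using p
proof (induction rule: rtrancl_induct)
  case base then show ?case using xv .
next
  case (step y z)
  have yi: "y \<in> interior V E" and z: "z = (if tau y = 1 then s1star V E tau x y else \<sigma>2 y)"
    using step.hyps(2) by (auto simp: play_step_def)
  have t: "tau y \<in> {1,2}" using g yi by (auto simp: game_graph_def)
  show ?case
  proof (cases "tau y = 1")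
    case True
    have yb1: "y \<in> interior_of V E tau 1" using yi True by (simp add: interior_of_def)
    have ex: "\<exists>w\<in>succs E y. \<not> xbar_one V E tau x w"
    proof (rule ccontr)
      assume "\<not> (\<exists>w\<in>succs E y. \<not> xbar_one V E tau x w)"
      then have "\<forall>w\<in>succs E y. xbar_one V E tau x w" by simp
      then have "xbar_one V E tau x y" by (rule xbar_one.alice[OF yb1])
      then show False using step.IH by simp
    qed
    then have "z = (SOME w. w \<in> succs E y \<and> \<not> xbar_one V E tau x w)"
      using z True by (simp add: s1star_def)
    moreover have "\<exists>w. w \<in> succs E y \<and> \<not> xbar_one V E tau x w" using ex by blast
    then have "\<not> xbar_one V E tau x (SOME w. w \<in> succs E y \<and> \<not> xbar_one V E tau x w)"
      by (rule someI2_ex) blast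
    ultimately show ?thesis by simp
  next
    case False
    then have "tau y = 2" using t by auto
    then have yb: "y \<in> interior_of V E tau 2" using yi by (simp add: interior_of_def)
    have "z \<in> succs E y" using s2 yb z False by (auto simp: strategies_def)
    then have "\<exists>w\<in>succs E y. xbar_one V E tau x w \<Longrightarrow> xbar_one V E tau x y"
      using xbar_one.bob[OF yb] by blast
    then show ?thesis using step.IH \<open>z \<in> succs E y\<close> by blast
  qed
qed

lemma part2:
  assumes g: "game_graph V E r tau" and s1: "\<sigma>1 \<in> strategies V E tau 1"
  shows "Zset V E r tau \<sigma>1 \<in> zero_sets V E r tau"
proof -
  let ?Z = "Zset V E r tau \<sigma>1"
  have sub: "?Z \<subseteq> bdry V E" using outcome_char[OF g s1] by (auto simp: Zset_def)
  have "\<not> xbar_one V E tau (\<lambda>v. v \<notin> ?Z) r"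
  proof
    assume a: "xbar_one V E tau (\<lambda>v. v \<notin> ?Z) r"
    let ?s = "s2star V E tau (\<lambda>v. v \<notin> ?Z)"
    have s2: "?s \<in> strategies V E tau 2" by (rule s2star_strat)
    let ?u = "outcome V E r tau \<sigma>1 ?s"
    have "?u \<in> ?Z" using s2 by (auto simp: Zset_def)
    moreover have xb: "xbar_one V E tau (\<lambda>v. v \<notin> ?Z) ?u"
      by (rule strongA[OF g s1 a conjunct1[OF outcome_char[OF g s1 s2]]])
    have "(\<lambda>v. v \<notin> ?Z) ?u" by (rule xbar_inv_leaf[OF xb conjunct2[OF outcome_char[OF g s1 s2]]])
    then have "?u \<notin> ?Z" by simp
    ultimately show False by blast
  qed
  then show ?thesis using sub by (simp add: zero_sets_def Lfun_def)
qed

lemma part4: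
  assumes g: "game_graph V E r tau" and s2: "\<sigma>2 \<in> strategies V E tau 2"
  shows "Aset V E r tau \<sigma>2 \<in> one_sets V E r tau"
proof -
  let ?A = "Aset V E r tau \<sigma>2"
  have sub: "?A \<subseteq> bdry V E" using outcome_char[OF g _ s2] by (auto simp: Aset_def)
  have "xbar_one V E tau (\<lambda>v. v \<in> ?A) r"
  proof (rule ccontr)
    assume a: "\<not> xbar_one V E tau (\<lambda>v. v \<in> ?A) r"
    let ?s = "s1star V E tau (\<lambda>v. v \<in> ?A)"
    have s1: "?s \<in> strategies V E tau 1" by (rule s1star_strat)
    let ?u = "outcome V E r tau ?s \<sigma>2"
    have "?u \<in> ?A" using s1 by (auto simp: Aset_def)
    moreover have xb: "\<not> xbar_one V E tau (\<lambda>v. v \<in> ?A) ?u"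
      by (rule strongB[OF g s2 a conjunct1[OF outcome_char[OF g s1 s2]]])
    have "\<not> (\<lambda>v. v \<in> ?A) ?u"
    proof
      assume "(\<lambda>v. v \<in> ?A) ?u"
      then have "xbar_one V E tau (\<lambda>v. v \<in> ?A) ?u"
        by (rule xbar_one.leaf[OF conjunct2[OF outcome_char[OF g s1 s2]]])
      then show False using xb by simp
    qed
    then have "?u \<notin> ?A" by simp
    ultimately show False by blast
  qed
  then show ?thesis using sub by (simp add: one_sets_def Lfun_def)
qed

lemma part1:
  assumes g: "game_graph V E r tau" and Z: "Z \<in> minimal_sets (zero_sets V E r tau)"
  shows "\<exists>\<sigma>1. Z = Zset V E r tau \<sigma>1 \<and> \<sigma>1 \<in> strategies V E tau 1"
proof -
  have nx: "\<not> xbar_one V E tau (\<lambda>v. v \<notin> Z) r"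
    using Z by (simp add: minimal_sets_def zero_sets_def Lfun_def)
  let ?s = "s1star V E tau (\<lambda>v. v \<notin> Z)"
  have s1: "?s \<in> strategies V E tau 1" by (rule s1star_strat)
  have "Zset V E r tau ?s \<subseteq> Z"
  proof
    fix u assume "u \<in> Zset V E r tau ?s"
    then obtain s2 where s2: "s2 \<in> strategies V E tau 2" and u: "u = outcome V E r tau ?s s2"
      by (auto simp: Zset_def)
    have xb: "\<not> xbar_one V E tau (\<lambda>v. v \<notin> Z) u"
      unfolding u by (rule strongB[OF g s2 nx conjunct1[OF outcome_char[OF g s1 s2]]])
    have ub: "u \<in> bdry V E" unfolding u by (rule conjunct2[OF outcome_char[OF g s1 s2]])
    show "u \<in> Z"
    proof (rule ccontr)
      assume "u \<notin> Z"
      then have "xbar_one V E tau (\<lambda>v. v \<notin> Z) u" by (intro xbar_one.leaf[OF ub]) simp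
      then show False using xb by simp
    qed
  qed
  moreover have "Zset V E r tau ?s \<in> zero_sets V E r tau" using part2[OF g s1] .
  ultimately have "Zset V E r tau ?s = Z" using Z unfolding minimal_sets_def by blast
  then show ?thesis using s1 by blast
qed

lemma part3:
  assumes g: "game_graph V E r tau" and A: "A \<in> minimal_sets (one_sets V E r tau)"
  shows "\<exists>\<sigma>2. A = Aset V E r tau \<sigma>2 \<and> \<sigma>2 \<in> strategies V E tau 2"
proof -
  have nx: "xbar_one V E tau (\<lambda>v. v \<in> A) r"
    using A by (simp add: minimal_sets_def one_sets_def Lfun_def)
  let ?s = "s2star V E tau (\<lambda>v. v \<in> A)"
  have s2: "?s \<in> strategies V E tau 2" by (rule s2star_strat)
  have "Aset V E r tau ?s \<subseteq> A"
  proof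
    fix u assume "u \<in> Aset V E r tau ?s"
    then obtain s1 where s1: "s1 \<in> strategies V E tau 1" and u: "u = outcome V E r tau s1 ?s"
      by (auto simp: Aset_def)
    have xb: "xbar_one V E tau (\<lambda>v. v \<in> A) u"
      unfolding u by (rule strongA[OF g s1 nx conjunct1[OF outcome_char[OF g s1 s2]]])
    have ub: "u \<in> bdry V E" unfolding u by (rule conjunct2[OF outcome_char[OF g s1 s2]])
    have "(\<lambda>v. v \<in> A) u" by (rule xbar_inv_leaf[OF xb ub])
    then show "u \<in> A" by simp
  qed
  moreover have "Aset V E r tau ?s \<in> one_sets V E r tau" using part4[OF g s2] .
  ultimately have "Aset V E r tau ?s = A" using A unfolding minimal_sets_def by blast
  then show ?thesis using s2 by blast
qed

theorem lemma7:
  fixes V :: "'v set" and E :: "('v \<times> 'v) set" and r :: 'v and tau :: "'v \<Rightarrow> nat"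
  assumes "game_graph V E r tau"
  shows "minimal_sets (zero_sets V E r tau) \<subseteq> {Zset V E r tau \<sigma>1 | \<sigma>1. \<sigma>1 \<in> strategies V E tau 1}
       \<and> {Zset V E r tau \<sigma>1 | \<sigma>1. \<sigma>1 \<in> strategies V E tau 1} \<subseteq> zero_sets V E r tau
       \<and> minimal_sets (one_sets V E r tau) \<subseteq> {Aset V E r tau \<sigma>2 | \<sigma>2. \<sigma>2 \<in> strategies V E tau 2}
       \<and> {Aset V E r tau \<sigma>2 | \<sigma>2. \<sigma>2 \<in> strategies V E tau 2} \<subseteq> one_sets V E r tau"
proof (intro conjI subsetI)
  fix Z assume "Z \<in> minimal_sets (zero_sets V E r tau)"
  then show "Z \<in> {Zset V E r tau \<sigma>1 | \<sigma>1. \<sigma>1 \<in> strategies V E tau 1}"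
    using part1[OF assms] by simp
next
  fix Z assume "Z \<in> {Zset V E r tau \<sigma>1 | \<sigma>1. \<sigma>1 \<in> strategies V E tau 1}"
  then obtain s where "s \<in> strategies V E tau 1" "Z = Zset V E r tau s" by blast
  then show "Z \<in> zero_sets V E r tau" using part2[OF assms] by simp
next
  fix A assume "A \<in> minimal_sets (one_sets V E r tau)"
  then show "A \<in> {Aset V E r tau \<sigma>2 | \<sigma>2. \<sigma>2 \<in> strategies V E tau 2}"
    using part3[OF assms] by simp
next
  fix A assume "A \<in> {Aset V E r tau \<sigma>2 | \<sigma>2. \<sigma>2 \<in> strategies V E tau 2}"
  then obtain s where "s \<in> strategies V E tau 2" "A = Aset V E r tau s" by blast
  then show "A \<in> one_sets V E r tau" using part4[OF assms] by simp
qed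

end
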